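(* Let $k\ge 2$ and $s\ge 1$ be integers, and let $r_1,\ldots,r_s$ be integers with $0\le r_i\le k$ and $r_i\ne 1$ for each $i\in\{1,\ldots,s\}$. Let $D$ be a strongly connected digraph such that every (directed) cycle of $D$ has length congruent to $r$ modulo $k$ for some $r\in\{r_1,\ldots,r_s\}$. Then $\chi_A(D)\le 2s+1$.
   Context: Digraphs are finite and loopless; paths and cycles are directed. A set of vertices of a digraph $D$ is acyclic if the subdigraph it induces contains no directed cycle. The dichromatic number $\chi_A(D)$ is the minimum $k$ such that $V(D)$ can be colored with $k$ colors so that every color class is acyclic. A digraph is strongly connected if for every ordered pair of distinct vertices $u,v$ there is a directed $uv$-path. *)

theory Defs
  imports Main
begin

text \<open>A (finite, loopless) digraph with vertex set V and arc set A.
  Multiple arcs are irrelevant for cycles/colourings, so arcs form a relation.\<close>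
definition digraph :: "'a set \<Rightarrow> ('a \<times> 'a) set \<Rightarrow> bool" where
  "digraph V A \<longleftrightarrow> finite V \<and> A \<subseteq> V \<times> V \<and> (\<forall>v. (v, v) \<notin> A)"

definition is_dicycle :: "('a \<times> 'a) set \<Rightarrow> 'a list \<Rightarrow> bool" where
  "is_dicycle A C \<longleftrightarrow> length C \<ge> 2 \<and> distinct C \<and>
     (\<forall>i < length C. (C ! i, C ! ((i + 1) mod length C)) \<in> A)"

definition acyclic_set :: "('a \<times> 'a) set \<Rightarrow> 'a set \<Rightarrow> bool" where
  "acyclic_set A S \<longleftrightarrow> \<not> (\<exists>C. is_dicycle A C \<and> set C \<subseteq> S)"

definition dichromatic_number :: "'a set \<Rightarrow> ('a \<times> 'a) set \<Rightarrow> nat" where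
  "dichromatic_number V A = (LEAST n. \<exists>c :: 'a \<Rightarrow> nat. c ` V \<subseteq> {..<n} \<and>
      (\<forall>j. acyclic_set A {v \<in> V. c v = j}))"

definition strongly_connected :: "'a set \<Rightarrow> ('a \<times> 'a) set \<Rightarrow> bool" where
  "strongly_connected V A \<longleftrightarrow> (\<forall>u \<in> V. \<forall>v \<in> V. u \<noteq> v \<longrightarrow> (u, v) \<in> A\<^sup>*)"

end

theory Submission
  imports Defs "HOL-Number_Theory.Cong"
begin

definition dpath :: "('a \<times> 'a) set \<Rightarrow> 'a list \<Rightarrow> bool" where
  "dpath A P \<longleftrightarrow> P \<noteq> [] \<and> distinct P \<and> (\<forall>i. Suc i < length P \<longrightarrow> (P ! i, P ! Suc i) \<in> A)"

definition good :: "('a \<times> 'a) set \<Rightarrow> 'a set \<Rightarrow> 'a set \<Rightarrow> ('a \<Rightarrow> nat) \<Rightarrow> bool" where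
  "good A V N h \<longleftrightarrow>
    (\<forall>x\<in>V. \<exists>P. dpath A P \<and> set P \<subseteq> V \<and> hd P \<in> N \<and> last P = x \<and> length P = Suc (h x)) \<and>
    (\<forall>C. is_dicycle A C \<and> set C \<subseteq> V \<longrightarrow>
       (\<exists>i<length C. h (C ! ((i+1) mod length C)) < h (C ! i) \<and>
          (\<exists>C'. is_dicycle A C' \<and> length C' = h (C ! i) - h (C ! ((i+1) mod length C)) + 1)))"

lemma dpath_Cons:
  assumes "dpath A P" "r \<notin> set P" "(r, hd P) \<in> A"
  shows "dpath A (r # P)"
  unfolding dpath_def
proof (intro conjI allI impI)
  show "distinct (r # P)" using assms unfolding dpath_def by auto
  fix i assume i: "Suc i < length (r # P)"
  show "((r # P) ! i, (r # P) ! Suc i) \<in> A"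
  proof (cases i)
    case 0 then show ?thesis using assms by (auto simp: dpath_def hd_conv_nth)
  next
    case (Suc j) then show ?thesis using assms i by (auto simp: dpath_def)
  qed
qed simp

lemma cons_cycle:
  assumes "dpath A P" "r \<notin> set P" "(r, hd P) \<in> A" "(last P, r) \<in> A"
  shows "is_dicycle A (r # P)"
proof -
  have d: "dpath A (r # P)" using dpath_Cons assms by metis
  have ne: "P \<noteq> []" using assms unfolding dpath_def by auto
  show ?thesis unfolding is_dicycle_def
  proof (intro conjI allI impI)
    show "2 \<le> length (r # P)" using ne by (cases P) auto
    show "distinct (r # P)" using d unfolding dpath_def by auto
    fix i assume i: "i < length (r # P)"
    show "((r # P) ! i, (r # P) ! ((i + 1) mod length (r # P))) \<in> A"
    proof (cases "Suc i < length (r # P)")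
      case True
      then have "(i + 1) mod length (r # P) = Suc i" by simp
      then show ?thesis using d True unfolding dpath_def by auto
    next
      case False
      then have ii: "i = length P" using i by simp
      then have "(i + 1) mod length (r # P) = 0" by simp
      moreover have "(r # P) ! i = last P" using ii ne by (simp add: last_conv_nth)
      ultimately show ?thesis using assms by simp
    qed
  qed
qed

lemma cycle_reach:
  assumes "is_dicycle A C" "set C \<subseteq> V" "i < length C" "j < length C"
  shows "(C ! i, C ! j) \<in> (A \<inter> V \<times> V)\<^sup>*"
proof -
  let ?L = "length C"
  have L: "?L > 0" using assms(3) by (cases C) auto
  have *: "(C ! i, C ! ((i + m) mod ?L)) \<in> (A \<inter> V \<times> V)\<^sup>*" for m
  proof (induction m)
    case 0
    have "i mod ?L = i" using assms(3) by simp
    then show ?case by simp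
  next
    case (Suc m)
    let ?p = "(i + m) mod ?L"
    have p: "?p < ?L" using L by simp
    have "(C ! ?p, C ! ((?p + 1) mod ?L)) \<in> A" using assms(1) p unfolding is_dicycle_def by blast
    moreover have "(?p + 1) mod ?L = (i + Suc m) mod ?L" by (simp add: mod_Suc_eq)
    moreover have "C ! ?p \<in> V" "C ! ((i + Suc m) mod ?L) \<in> V"
      using p L assms(2) nth_mem by auto
    ultimately show ?case using Suc by (auto intro: rtrancl_into_rtrancl)
  qed
  have "(i + (?L - i + j)) mod ?L = j" using assms(3,4)
    by (metis add.commute le_add_diff_inverse less_imp_le_nat mod_add_self2 mod_less add.assoc)
  then show ?thesis using *[of "?L - i + j"] by simp
qed

lemma reach_avoid:
  assumes "(r, x) \<in> R\<^sup>*" "x \<noteq> r"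
  shows "\<exists>n. n \<noteq> r \<and> (r, n) \<in> R \<and> (n, x) \<in> (R \<inter> (-{r}) \<times> (-{r}))\<^sup>*"
  using assms
proof (induction rule: rtrancl_induct)
  case base then show ?case by simp
next
  case (step y z)
  show ?case
  proof (cases "y = r")
    case True then show ?thesis using step by auto
  next
    case False
    then obtain n where "n \<noteq> r" "(r, n) \<in> R" "(n, y) \<in> (R \<inter> (-{r}) \<times> (-{r}))\<^sup>*" using step by blast
    moreover have "(y, z) \<in> R \<inter> (-{r}) \<times> (-{r})" using step False by auto
    ultimately show ?thesis by (meson rtrancl_into_rtrancl)
  qed
qed

lemma reach_restrict:
  assumes "(r, x) \<in> R\<^sup>*"
  shows "(r, x) \<in> (R \<inter> {x. (r,x) \<in> R\<^sup>*} \<times> {x. (r,x) \<in> R\<^sup>*})\<^sup>*"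
  using assms
proof (induction rule: rtrancl_induct)
  case base then show ?case by simp
next
  case (step y z)
  then have "(y, z) \<in> R \<inter> {x. (r,x) \<in> R\<^sup>*} \<times> {x. (r,x) \<in> R\<^sup>*}"
    by (auto intro: rtrancl_into_rtrancl)
  then show ?case using step by (meson rtrancl_into_rtrancl)
qed

lemma reach_outside:
  assumes "(a, y) \<in> R\<^sup>*" "y \<notin> X" "\<And>u v. u \<in> X \<Longrightarrow> (u, v) \<in> R \<Longrightarrow> v \<in> X"
  shows "a \<notin> X \<and> (a, y) \<in> (R \<inter> (-X) \<times> (-X))\<^sup>*"
  using assms(1)
proof (induction rule: converse_rtrancl_induct)
  case base then show ?case using assms(2) by simp
next
  case (step a b)
  then have "a \<notin> X" using assms(3) by blast
  then have "(a, b) \<in> R \<inter> (-X) \<times> (-X)" using step by auto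
  then show ?case using step \<open>a \<notin> X\<close> by (meson converse_rtrancl_into_rtrancl)
qed

lemma main:
  assumes "finite V" "N \<subseteq> V" "\<forall>x\<in>V. \<exists>n\<in>N. (n, x) \<in> (A \<inter> V \<times> V)\<^sup>*"
  shows "\<exists>h. good A V N h"
  using assms
proof (induction "card V" arbitrary: V N rule: less_induct)
  case less
  show ?case
  proof (cases "V = {}")
    case True
    then show ?thesis unfolding good_def is_dicycle_def by auto
  next
    case False
    then obtain x0 where "x0 \<in> V" by blast
    then obtain r where r: "r \<in> N" using less by blast
    hence rV: "r \<in> V" using less by blast
    define R where "R = A \<inter> V \<times> V"
    define X where "X = {x. (r,x) \<in> R\<^sup>*}"
    have XV: "X \<subseteq> V"
    proof
      fix x assume "x \<in> X"
      then have "(r, x) \<in> R\<^sup>*" by (simp add: X_def)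
      then show "x \<in> V" using rV by (cases rule: rtranclE) (auto simp: R_def)
    qed
    have rX: "r \<in> X" by (simp add: X_def)
    have closed: "\<And>u v. u \<in> X \<Longrightarrow> (u, v) \<in> R \<Longrightarrow> v \<in> X"
      by (auto simp: X_def intro: rtrancl_into_rtrancl)
    show ?thesis
    proof (cases "X = V")
      case True
      define V' where "V' = V - {r}"
      define N' where "N' = {n\<in>V'. (r,n)\<in>A}"
      have cardV': "card V' < card V" using rV less.prems(1) card_Diff1_less[of V r] by (simp add: V'_def)
      have eqR: "R \<inter> (-{r}) \<times> (-{r}) = A \<inter> V' \<times> V'" by (auto simp: R_def V'_def)
      have reach': "\<forall>x\<in>V'. \<exists>n\<in>N'. (n,x) \<in> (A \<inter> V' \<times> V')\<^sup>*"
      proof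
        fix x assume x: "x \<in> V'"
        then have "(r, x) \<in> R\<^sup>*" "x \<noteq> r" using True by (auto simp: X_def V'_def)
        then obtain n where n: "n \<noteq> r" "(r, n) \<in> R" "(n, x) \<in> (R \<inter> (-{r}) \<times> (-{r}))\<^sup>*"
          using reach_avoid by metis
        then have "n \<in> N'" by (auto simp: N'_def V'_def R_def)
        then show "\<exists>n\<in>N'. (n,x) \<in> (A \<inter> V' \<times> V')\<^sup>*" using n eqR by auto
      qed
      obtain h' where h': "good A V' N' h'"
        using less.hyps[OF cardV' _ _ reach'] less.prems(1) by (auto simp: V'_def N'_def)
      define h where "h = (\<lambda>x. if x = r then 0 else Suc (h' x))"
      have part1: "\<forall>x\<in>V. \<exists>P. dpath A P \<and> set P \<subseteq> V \<and> hd P \<in> N \<and> last P = x \<and> length P = Suc (h x)"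
      proof
        fix x assume x: "x \<in> V"
        show "\<exists>P. dpath A P \<and> set P \<subseteq> V \<and> hd P \<in> N \<and> last P = x \<and> length P = Suc (h x)"
        proof (cases "x = r")
          case True
          then show ?thesis using r rV by (intro exI[of _ "[r]"]) (auto simp: dpath_def h_def)
        next
          case False
          then have "x \<in> V'" using x by (simp add: V'_def)
          then obtain P where P: "dpath A P" "set P \<subseteq> V'" "hd P \<in> N'" "last P = x" "length P = Suc (h' x)"
            using h' unfolding good_def by blast
          have ne: "P \<noteq> []" using P(1) by (simp add: dpath_def)
          have "dpath A (r # P)" using P by (intro dpath_Cons) (auto simp: V'_def N'_def)
          then show ?thesis using P ne False r rV
            by (intro exI[of _ "r # P"]) (auto simp: V'_def h_def)
        qed
      qed
      have part2: "\<forall>C. is_dicycle A C \<and> set C \<subseteq> V \<longrightarrow>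
       (\<exists>i<length C. h (C ! ((i+1) mod length C)) < h (C ! i) \<and>
          (\<exists>C'. is_dicycle A C' \<and> length C' = h (C ! i) - h (C ! ((i+1) mod length C)) + 1))"
      proof (intro allI impI)
        fix C assume C: "is_dicycle A C \<and> set C \<subseteq> V"
        let ?L = "length C"
        have L2: "?L \<ge> 2" using C by (simp add: is_dicycle_def)
        show "\<exists>i<length C. h (C ! ((i+1) mod length C)) < h (C ! i) \<and>
          (\<exists>C'. is_dicycle A C' \<and> length C' = h (C ! i) - h (C ! ((i+1) mod length C)) + 1)"
        proof (cases "r \<in> set C")
          case False
          then have "set C \<subseteq> V'" using C by (auto simp: V'_def)
          then obtain i where i: "i < ?L" "h' (C ! ((i+1) mod ?L)) < h' (C ! i)"
            "\<exists>C'. is_dicycle A C' \<and> length C' = h' (C ! i) - h' (C ! ((i+1) mod ?L)) + 1"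
            using h' C unfolding good_def by blast
          have m: "(i+1) mod ?L < ?L" by (rule mod_less_divisor) (use L2 in linarith)
          have "C ! i \<noteq> r" "C ! ((i+1) mod ?L) \<noteq> r" using False i(1) m nth_mem by metis+
          then show ?thesis using i by (intro exI[of _ i]) (auto simp: h_def)
        next
          case True
          then obtain j where j: "j < ?L" "C ! j = r" by (metis in_set_conv_nth)
          define i where "i = (if j = 0 then ?L - 1 else j - 1)"
          have i: "i < ?L" "(i + 1) mod ?L = j" "i \<noteq> j" using j L2 by (auto simp: i_def)
          have dist: "distinct C" using C by (simp add: is_dicycle_def)
          have u: "C ! i \<noteq> r" using i j dist by (metis nth_eq_iff_index_eq)
          have uV': "C ! i \<in> V'" using u C i(1) nth_mem by (fastforce simp: V'_def)
          obtain P where P: "dpath A P" "set P \<subseteq> V'" "hd P \<in> N'" "last P = C ! i" "length P = Suc (h' (C ! i))"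
            using h' uV' unfolding good_def by blast
          have arc: "(C ! i, C ! ((i+1) mod ?L)) \<in> A" using C i(1) by (simp add: is_dicycle_def)
          have cyc: "is_dicycle A (r # P)"
            using P arc i j by (intro cons_cycle) (auto simp: V'_def N'_def)
          show ?thesis using i j u cyc P
            by (intro exI[of _ i]) (auto simp: h_def)
        qed
      qed
      show ?thesis using part1 part2 unfolding good_def by blast
    next
      case False
      define Y where "Y = V - X"
      have cardX: "card X < card V" using False XV less.prems(1) by (simp add: psubset_card_mono psubsetI)
      have cardY: "card Y < card V"
      proof -
        have "Y \<subseteq> V - {r}" using rX by (auto simp: Y_def)
        then have "card Y \<le> card (V - {r})" using less.prems(1) by (intro card_mono) auto
        also have "\<dots> < card V" using rV less.prems(1) by (rule card_Diff1_less[rotated])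
        finally show ?thesis .
      qed
      have eqX: "R \<inter> X \<times> X = A \<inter> X \<times> X" using XV by (auto simp: R_def)
      have eqY: "R \<inter> (-X) \<times> (-X) = A \<inter> Y \<times> Y" by (auto simp: R_def Y_def)
      have reachX: "\<forall>x\<in>X. \<exists>n\<in>{r}. (n,x) \<in> (A \<inter> X \<times> X)\<^sup>*"
        using reach_restrict eqX by (fastforce simp: X_def)
      have reachY: "\<forall>y\<in>Y. \<exists>n\<in>N \<inter> Y. (n,y) \<in> (A \<inter> Y \<times> Y)\<^sup>*"
      proof
        fix y assume y: "y \<in> Y"
        then obtain n where n: "n \<in> N" "(n, y) \<in> R\<^sup>*" using less.prems(3) by (auto simp: Y_def R_def)
        have "n \<notin> X \<and> (n, y) \<in> (R \<inter> (-X) \<times> (-X))\<^sup>*"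
          using reach_outside[OF n(2)] y closed by (auto simp: Y_def)
        then show "\<exists>n\<in>N \<inter> Y. (n,y) \<in> (A \<inter> Y \<times> Y)\<^sup>*" using n less.prems(2) eqY by (auto simp: Y_def)
      qed
      obtain hX where hX: "good A X {r} hX"
        using less.hyps[OF cardX _ _ reachX] less.prems(1) XV rX by (meson finite_subset empty_subsetI insert_subset)
      obtain hY where hY: "good A Y (N \<inter> Y) hY"
        using less.hyps[OF cardY _ _ reachY] less.prems(1) by (auto simp: Y_def)
      define h where "h = (\<lambda>x. if x \<in> X then hX x else hY x)"
      have part1: "\<forall>x\<in>V. \<exists>P. dpath A P \<and> set P \<subseteq> V \<and> hd P \<in> N \<and> last P = x \<and> length P = Suc (h x)"
      proof
        fix x assume x: "x \<in> V"
        show "\<exists>P. dpath A P \<and> set P \<subseteq> V \<and> hd P \<in> N \<and> last P = x \<and> length P = Suc (h x)"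
        proof (cases "x \<in> X")
          case True
          then obtain P where "dpath A P \<and> set P \<subseteq> X \<and> hd P \<in> {r} \<and> last P = x \<and> length P = Suc (hX x)"
            using hX unfolding good_def by blast
          then show ?thesis using True XV r by (intro exI[of _ P]) (auto simp: h_def)
        next
          case False
          then have "x \<in> Y" using x by (simp add: Y_def)
          then obtain P where "dpath A P \<and> set P \<subseteq> Y \<and> hd P \<in> N \<inter> Y \<and> last P = x \<and> length P = Suc (hY x)"
            using hY unfolding good_def by blast
          then show ?thesis using False by (intro exI[of _ P]) (auto simp: h_def Y_def)
        qed
      qed
      have part2: "\<forall>C. is_dicycle A C \<and> set C \<subseteq> V \<longrightarrow>
       (\<exists>i<length C. h (C ! ((i+1) mod length C)) < h (C ! i) \<and>
          (\<exists>C'. is_dicycle A C' \<and> length C' = h (C ! i) - h (C ! ((i+1) mod length C)) + 1))"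
      proof (intro allI impI)
        fix C assume C: "is_dicycle A C \<and> set C \<subseteq> V"
        let ?L = "length C"
        have L2: "?L \<ge> 2" using C by (simp add: is_dicycle_def)
        show "\<exists>i<length C. h (C ! ((i+1) mod length C)) < h (C ! i) \<and>
          (\<exists>C'. is_dicycle A C' \<and> length C' = h (C ! i) - h (C ! ((i+1) mod length C)) + 1)"
        proof (cases "\<exists>v\<in>set C. v \<in> X")
          case True
          then obtain a where a: "a < ?L" "C ! a \<in> X" by (metis in_set_conv_nth)
          have sub: "set C \<subseteq> X"
          proof
            fix w assume "w \<in> set C"
            then obtain b where b: "b < ?L" "C ! b = w" by (metis in_set_conv_nth)
            have "(C ! a, C ! b) \<in> R\<^sup>*" using cycle_reach[of A C V a b] C a b by (simp add: R_def)
            then show "w \<in> X" using a b by (auto simp: X_def intro: rtrancl_trans)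
          qed
          then obtain i where i: "i < ?L" "hX (C ! ((i+1) mod ?L)) < hX (C ! i)"
            "\<exists>C'. is_dicycle A C' \<and> length C' = hX (C ! i) - hX (C ! ((i+1) mod ?L)) + 1"
            using hX C unfolding good_def by blast
          have m: "(i+1) mod ?L < ?L" by (rule mod_less_divisor) (use L2 in linarith)
          have "C ! i \<in> X" "C ! ((i+1) mod ?L) \<in> X" using sub i(1) m nth_mem by blast+
          then show ?thesis using i by (intro exI[of _ i]) (auto simp: h_def)
        next
          case False
          then have sub: "set C \<subseteq> Y" using C by (auto simp: Y_def)
          then obtain i where i: "i < ?L" "hY (C ! ((i+1) mod ?L)) < hY (C ! i)"
            "\<exists>C'. is_dicycle A C' \<and> length C' = hY (C ! i) - hY (C ! ((i+1) mod ?L)) + 1"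
            using hY C unfolding good_def by blast
          have m: "(i+1) mod ?L < ?L" by (rule mod_less_divisor) (use L2 in linarith)
          have "C ! i \<notin> X" "C ! ((i+1) mod ?L) \<notin> X" using sub i(1) m nth_mem by (fastforce simp: Y_def)+
          then show ?thesis using i by (intro exI[of _ i]) (auto simp: h_def)
        qed
      qed
      show ?thesis using part1 part2 unfolding good_def by blast
    qed
  qed
qed

lemma greedy:
  assumes "finite S" "\<forall>a\<in>S. card {b\<in>S. E a b \<or> E b a} \<le> d" "\<forall>a. \<not> E a a"
  shows "\<exists>g. (\<forall>a\<in>S. g a < Suc d) \<and> (\<forall>a\<in>S. \<forall>b\<in>S. E a b \<longrightarrow> g a \<noteq> g b)"
proof -
  have "finite T \<Longrightarrow> T \<subseteq> S \<Longrightarrow> \<exists>g. (\<forall>a\<in>T. g a < Suc d) \<and> (\<forall>a\<in>T. \<forall>b\<in>T. E a b \<longrightarrow> g a \<noteq> g b)" for T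
  proof (induction T rule: finite_induct)
    case empty then show ?case by simp
  next
    case (insert x T)
    then obtain g where g: "\<forall>a\<in>T. g a < Suc d" "\<forall>a\<in>T. \<forall>b\<in>T. E a b \<longrightarrow> g a \<noteq> g b" by auto
    define NB where "NB = {b\<in>T. E x b \<or> E b x}"
    have "NB \<subseteq> {b\<in>S. E x b \<or> E b x}" using insert by (auto simp: NB_def)
    moreover have "finite {b\<in>S. E x b \<or> E b x}" using assms(1) by simp
    ultimately have "card NB \<le> card {b\<in>S. E x b \<or> E b x}" by (rule card_mono[rotated])
    moreover have "card {b\<in>S. E x b \<or> E b x} \<le> d" using assms(2) insert(4) by blast
    ultimately have "card NB \<le> d" by linarith
    moreover have "finite NB" using insert(1) by (simp add: NB_def)
    ultimately have cg: "card (g ` NB) \<le> d" using card_image_le[of NB g] by linarith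
    have "\<not> {..<Suc d} \<subseteq> g ` NB"
    proof
      assume "{..<Suc d} \<subseteq> g ` NB"
      then have "card {..<Suc d} \<le> card (g ` NB)" using insert(1) by (intro card_mono) (auto simp: NB_def)
      then show False using cg by simp
    qed
    then obtain c where c: "c < Suc d" "c \<notin> g ` NB" by auto
    define g' where "g' = g(x := c)"
    show ?case
    proof (intro exI[of _ g'] conjI ballI impI)
      fix a assume "a \<in> insert x T" then show "g' a < Suc d" using g c by (auto simp: g'_def)
    next
      fix a b assume ab: "a \<in> insert x T" "b \<in> insert x T" "E a b"
      show "g' a \<noteq> g' b"
      proof (cases "a = x")
        case True
        then have "b \<noteq> x" using ab assms(3) by auto
        then have "b \<in> NB" using ab True by (auto simp: NB_def)
        then show ?thesis using True c \<open>b \<noteq> x\<close> by (auto simp: g'_def)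
      next
        case False
        show ?thesis
        proof (cases "b = x")
          case True
          then have "a \<in> NB" using ab False by (auto simp: NB_def)
          then show ?thesis using True c False by (auto simp: g'_def)
        next
          case False2: False
          then show ?thesis using g ab False by (auto simp: g'_def)
        qed
      qed
    qed
  qed
  then show ?thesis using assms(1) by blast
qed

theorem theorem1:
  fixes k s :: nat and r :: "nat \<Rightarrow> nat"
    and V :: "'a set" and A :: "('a \<times> 'a) set"
  assumes "k \<ge> 2" and "s \<ge> 1"
    and "\<forall>i \<in> {1..s}. r i \<le> k \<and> r i \<noteq> 1"
    and "digraph V A" and "strongly_connected V A"
    and "\<forall>C. is_dicycle A C \<longrightarrow> (\<exists>i \<in> {1..s}. length C mod k = r i mod k)"
  shows "dichromatic_number V A \<le> 2 * s + 1"
proof -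
  have finV: "finite V" using assms(4) by (simp add: digraph_def)
  obtain h where h: "good A V V h"
    using main[OF finV, of V A] by blast
  define E where "E = (\<lambda>a b. \<exists>j\<in>{1..s}. (b + 1) mod k = (a + r j) mod k)"
  have irr: "\<forall>a. \<not> E a a"
  proof (intro allI notI)
    fix a assume "E a a"
    then obtain j where j: "j \<in> {1..s}" "(a + 1) mod k = (a + r j) mod k" by (auto simp: E_def)
    then have "[a + 1 = a + r j] (mod k)" unfolding cong_def by blast
    then have "[1 = r j] (mod k)" by (rule cong_add_lcancel_nat[THEN iffD1])
    then have "1 mod k = r j mod k" unfolding cong_def .
    moreover have "r j \<le> k" "r j \<noteq> 1" using assms(3) j(1) by auto
    moreover have "1 mod k = 1" using assms(1) by simp
    ultimately have rj1: "r j mod k = 1" by linarith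
    show False
    proof (cases "r j < k")
      case True
      then have "r j mod k = r j" by (rule mod_less)
      then show False using rj1 \<open>r j \<noteq> 1\<close> by linarith
    next
      case False
      then have "r j = k" using \<open>r j \<le> k\<close> by linarith
      then have "r j mod k = 0" by simp
      then show False using rj1 by linarith
    qed
  qed
  have deg: "\<forall>a\<in>{..<k}. card {b\<in>{..<k}. E a b \<or> E b a} \<le> 2 * s"
  proof
    fix a assume a: "a \<in> {..<k}"
    have "{b\<in>{..<k}. E a b \<or> E b a} \<subseteq> (\<lambda>j. (a + r j + (k - 1)) mod k) ` {1..s} \<union> (\<lambda>j. (a + 1 + (k - r j)) mod k) ` {1..s}"
    proof
      fix b assume b: "b \<in> {b\<in>{..<k}. E a b \<or> E b a}"
      then have bk: "b < k" by simp
      show "b \<in> (\<lambda>j. (a + r j + (k - 1)) mod k) ` {1..s} \<union> (\<lambda>j. (a + 1 + (k - r j)) mod k) ` {1..s}"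
      proof (cases "E a b")
        case True
        then obtain j where j: "j \<in> {1..s}" "(b + 1) mod k = (a + r j) mod k" by (auto simp: E_def)
        have "b = (b + 1 + (k - 1)) mod k" using bk assms(1) by simp
        also have "\<dots> = ((b + 1) mod k + (k - 1)) mod k" by (simp add: mod_add_left_eq)
        also have "\<dots> = (a + r j + (k - 1)) mod k" using j(2) by (simp add: mod_add_left_eq)
        finally show ?thesis using j(1) by blast
      next
        case False
        then have "E b a" using b by simp
        then obtain j where j: "j \<in> {1..s}" "(a + 1) mod k = (b + r j) mod k" by (auto simp: E_def)
        have rk: "r j \<le> k" using assms(3) j(1) by auto
        have "b = (b + r j + (k - r j)) mod k" using bk rk by simp
        also have "\<dots> = ((b + r j) mod k + (k - r j)) mod k" by (simp add: mod_add_left_eq)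
        also have "\<dots> = ((a + 1) mod k + (k - r j)) mod k" using j(2) by simp
        also have "\<dots> = (a + 1 + (k - r j)) mod k" by (rule mod_add_left_eq)
        finally show ?thesis using j(1) by blast
      qed
    qed
    then have "card {b\<in>{..<k}. E a b \<or> E b a} \<le> card ((\<lambda>j. (a + r j + (k - 1)) mod k) ` {1..s} \<union> (\<lambda>j. (a + 1 + (k - r j)) mod k) ` {1..s})"
      by (intro card_mono) auto
    also have "\<dots> \<le> card ((\<lambda>j. (a + r j + (k - 1)) mod k) ` {1..s}) + card ((\<lambda>j. (a + 1 + (k - r j)) mod k) ` {1..s})"
      by (rule card_Un_le)
    also have "\<dots> \<le> s + s" by (intro add_mono) (metis card_atLeastAtMost card_image_le finite_atLeastAtMost diff_Suc_1)+
    finally show "card {b\<in>{..<k}. E a b \<or> E b a} \<le> 2 * s" by simp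
  qed
  obtain g where g: "\<forall>a\<in>{..<k}. g a < Suc (2 * s)" "\<forall>a\<in>{..<k}. \<forall>b\<in>{..<k}. E a b \<longrightarrow> g a \<noteq> g b"
    using greedy[OF _ deg irr] by blast
  define c where "c = (\<lambda>v. g (h v mod k))"
  have k0: "k > 0" using assms(1) by simp
  have P: "c ` V \<subseteq> {..<2 * s + 1} \<and> (\<forall>j. acyclic_set A {v \<in> V. c v = j})"
  proof (intro conjI allI)
    show "c ` V \<subseteq> {..<2 * s + 1}" using g(1) k0 by (auto simp: c_def)
  next
    fix j0
    show "acyclic_set A {v \<in> V. c v = j0}" unfolding acyclic_set_def
    proof
      assume "\<exists>C. is_dicycle A C \<and> set C \<subseteq> {v \<in> V. c v = j0}"
      then obtain C where C: "is_dicycle A C" "set C \<subseteq> {v \<in> V. c v = j0}" by blast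
      let ?L = "length C"
      have L2: "?L \<ge> 2" using C by (simp add: is_dicycle_def)
      have "set C \<subseteq> V" using C by auto
      then obtain i where i: "i < ?L" "h (C ! ((i+1) mod ?L)) < h (C ! i)"
        "\<exists>C'. is_dicycle A C' \<and> length C' = h (C ! i) - h (C ! ((i+1) mod ?L)) + 1"
        using h C unfolding good_def by blast
      define u where "u = C ! i"
      define w where "w = C ! ((i+1) mod ?L)"
      have m: "(i+1) mod ?L < ?L" by (rule mod_less_divisor) (use L2 in linarith)
      have cu: "c u = j0" "c w = j0" using C(2) i(1) m nth_mem by (fastforce simp: u_def w_def)+
      obtain C' where C': "is_dicycle A C'" "length C' = h u - h w + 1" using i(3) by (auto simp: u_def w_def)
      obtain j where j: "j \<in> {1..s}" "length C' mod k = r j mod k" using assms(6) C'(1) by blast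
      have hu: "h u + 1 = h w + length C'" using C'(2) i(2) by (simp add: u_def w_def)
      have "E (h w mod k) (h u mod k)"
      proof -
        have "(h u mod k + 1) mod k = (h u + 1) mod k" by (rule mod_add_left_eq)
        also have "\<dots> = (h w + length C') mod k" using hu by simp
        also have "\<dots> = (h w + length C' mod k) mod k" by (simp add: mod_add_right_eq)
        also have "\<dots> = (h w + r j mod k) mod k" using j(2) by simp
        also have "\<dots> = (h w mod k + r j) mod k" by (simp add: mod_add_right_eq mod_add_left_eq)
        finally show ?thesis using j(1) by (auto simp: E_def)
      qed
      then have "g (h w mod k) \<noteq> g (h u mod k)" using g(2) k0 by auto
      then show False using cu by (simp add: c_def)
    qed
  qed
  show ?thesis unfolding dichromatic_number_def by (rule Least_le) (use P in blast)
qed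

end
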